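(* Assume $z_1-z_2+z_3-z_4=0$. Then for each phase $\ell\in\{w,\textit{nw}\}$, each $k\in\{1,\dots,4\}$ and each $j\in\{1,\dots,4\}$ with $j\ne k$, $$\frac{\partial\big(\overline{G}_{\ell,k+1/2}-\overline{G}_{\ell,k-1/2}\big)}{\partial S_{\ell,j}}\le0 .$$
   Context: An interaction region has four vertices labeled $k\in\{1,2,3,4\}$ counterclockwise; indices are cyclic mod 4. Vertex $k$ has depth $z_k\in\mathbb{R}$ and wetting saturation $S_k$; $S_{w,k}=S_k$, $S_{\textit{nw},k}=1-S_k$, so $\partial/\partial S_{\textit{nw},j}=-\partial/\partial S_j$. Half-interface $k+1/2$ joins vertices $k$ and $k+1$, with transmissibility $\overline{T}_{k+1/2}>0$ and $\overline{\Delta z}_{k+1/2}=z_{k+1}-z_k$. Two phases $w,\textit{nw}$ with constant densities $\rho_w,\rho_{\textit{nw}}$; $g>0$. Mobilities $\lambda_w,\lambda_{\textit{nw}}$ are positive differentiable functions of $S$, $\lambda_w$ nondecreasing and $\lambda_{\textit{nw}}$ nonincreasing in $S$; $\lambda_{\ell,k}=\lambda_\ell(S_k)$. $H(a,b)=ab/(a+b)$. Limiter $\varphi(r)=\dfrac{r^4+r^3+r^2+r}{r^4+r^3+r^2+r+1}$, $r\ge0$. Weights: $\overline{\omega}^G_{k+1/2}=\varphi\big(\overline{T}_{k+3/2}\overline{\Delta z}_{k+3/2}/(\overline{T}_{k+1/2}\overline{\Delta z}_{k+1/2})\big)$ if $\overline{\Delta z}_{k+1/2}\overline{\Delta z}_{k+3/2}>0$;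 $=\varphi\big(\overline{T}_{k-1/2}\overline{\Delta z}_{k-1/2}/(\overline{T}_{k+1/2}\overline{\Delta z}_{k+1/2})\big)$ if $\overline{\Delta z}_{k+1/2}\overline{\Delta z}_{k-1/2}>0$; $=0$ otherwise. For an ordered pair $(\ell,m)$ of the two distinct phases with $(\rho_\ell-\rho_m)\overline{\Delta z}_{k+1/2}>0$, writing $\omega=\overline{\omega}^G_{k+1/2}$: $\overline{\psi}_{\ell,m,k+1/2}=(1-\omega)H(\lambda_{\ell,k},\lambda_{m,k+1})+\omega H(\lambda_{\ell,k},\lambda_{m,k+2})$ if $\overline{\Delta z}_{k+1/2}\overline{\Delta z}_{k+3/2}>0$; $=(1-\omega)H(\lambda_{\ell,k},\lambda_{m,k+1})+\omega H(\lambda_{\ell,k-1},\lambda_{m,k+1})$ if $\overline{\Delta z}_{k+1/2}\overline{\Delta z}_{k-1/2}>0$; $=H(\lambda_{\ell,k},\lambda_{m,k+1})$ otherwise. If $(\rho_\ell-\rho_m)\overline{\Delta z}_{k+1/2}<0$, $\overline{\psi}_{\ell,m,k+1/2}$ is given by the same formulas with $\ell$ and $m$ interchanged; if $(\rho_\ell-\rho_m)\overline{\Delta z}_{k+1/2}=0$, set $\overline{\psi}_{\ell,m,k+1/2}=0$. Buoyancy flux of phase $\ell$ at half-interface $k+1/2$: $\overline{G}_{\ell,k+1/2}=\overline{T}_{k+1/2}\,\overline{\psi}_{\ell,m,k+1/2}\,(\rho_\ell-\rho_m)\,g\,\overline{\Delta z}_{k+1/2}$, where $m$ is the other phase. *)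

theory Defs
  imports "HOL-Analysis.Analysis"
begin

datatype phase = W | NW

fun other :: "phase \<Rightarrow> phase" where
  "other W = NW" | "other NW = W"

definition cyc :: "int \<Rightarrow> int" where
  "cyc k = (k - 1) mod 4 + 1"

definition Hm :: "real \<Rightarrow> real \<Rightarrow> real" where
  "Hm a b = a * b / (a + b)"

definition limiter :: "real \<Rightarrow> real" where
  "limiter r = (r^4 + r^3 + r^2 + r) / (r^4 + r^3 + r^2 + r + 1)"

text \<open>Half-interface k+1/2 is indexed by k. T k is the transmissibility of
  half-interface k+1/2 (for k in 1..4), z k the depth of vertex k.\<close>
definition Tb :: "(int \<Rightarrow> real) \<Rightarrow> int \<Rightarrow> real" where
  "Tb T k = T (cyc k)"

definition dzb :: "(int \<Rightarrow> real) \<Rightarrow> int \<Rightarrow> real" where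
  "dzb z k = z (cyc (k + 1)) - z (cyc k)"

definition omegaG :: "(int \<Rightarrow> real) \<Rightarrow> (int \<Rightarrow> real) \<Rightarrow> int \<Rightarrow> real" where
  "omegaG T z k =
     (if dzb z k * dzb z (k + 1) > 0
      then limiter (Tb T (k + 1) * dzb z (k + 1) / (Tb T k * dzb z k))
      else if dzb z k * dzb z (k - 1) > 0
      then limiter (Tb T (k - 1) * dzb z (k - 1) / (Tb T k * dzb z k))
      else 0)"

definition psi0 :: "(real \<Rightarrow> real) \<Rightarrow> (real \<Rightarrow> real) \<Rightarrow> (int \<Rightarrow> real) \<Rightarrow> (int \<Rightarrow> real)
    \<Rightarrow> (int \<Rightarrow> real) \<Rightarrow> int \<Rightarrow> real" where
  "psi0 a b T z S k =
     (let \<omega> = omegaG T z k; s = (\<lambda>i. S (cyc i)) in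
      if dzb z k * dzb z (k + 1) > 0
      then (1 - \<omega>) * Hm (a (s k)) (b (s (k + 1))) + \<omega> * Hm (a (s k)) (b (s (k + 2)))
      else if dzb z k * dzb z (k - 1) > 0
      then (1 - \<omega>) * Hm (a (s k)) (b (s (k + 1))) + \<omega> * Hm (a (s (k - 1))) (b (s (k + 1)))
      else Hm (a (s k)) (b (s (k + 1))))"

text \<open>lam W = wetting mobility as function of S, lam NW = non-wetting mobility as function of S.\<close>
definition psi :: "(phase \<Rightarrow> real) \<Rightarrow> (phase \<Rightarrow> real \<Rightarrow> real) \<Rightarrow> (int \<Rightarrow> real)
    \<Rightarrow> (int \<Rightarrow> real) \<Rightarrow> (int \<Rightarrow> real) \<Rightarrow> phase \<Rightarrow> phase \<Rightarrow> int \<Rightarrow> real" where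
  "psi rho lam T z S l m k =
     (let d = (rho l - rho m) * dzb z k in
      if d > 0 then psi0 (lam l) (lam m) T z S k
      else if d < 0 then psi0 (lam m) (lam l) T z S k
      else 0)"

definition Gflux :: "(phase \<Rightarrow> real) \<Rightarrow> real \<Rightarrow> (phase \<Rightarrow> real \<Rightarrow> real) \<Rightarrow> (int \<Rightarrow> real)
    \<Rightarrow> (int \<Rightarrow> real) \<Rightarrow> (int \<Rightarrow> real) \<Rightarrow> phase \<Rightarrow> int \<Rightarrow> real" where
  "Gflux rho g lam T z S l k =
     Tb T k * psi rho lam T z S l (other l) k * (rho l - rho (other l)) * g * dzb z k"

text \<open>Partial derivative with respect to the phase-l saturation at vertex j:
  S_w = S, S_nw = 1 - S, hence d/dS_nw = - d/dS.\<close>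
definition phase_pderiv :: "phase \<Rightarrow> ((int \<Rightarrow> real) \<Rightarrow> real) \<Rightarrow> (int \<Rightarrow> real) \<Rightarrow> int \<Rightarrow> real" where
  "phase_pderiv l F S j =
     (let d = deriv (\<lambda>t. F (S(j := t))) (S j) in if l = W then d else - d)"

end

theory Submission
  imports Defs
begin


lemma cyc_range: "cyc i \<in> {1..4}" by (simp add: cyc_def)
lemma cyc_id: "k \<in> {1..4} \<Longrightarrow> cyc k = k" by (auto simp: cyc_def)
lemma cyc_add: "cyc (i + n) = cyc (cyc i + n)"
  unfolding cyc_def by (simp add: mod_simps algebra_simps)

lemma dz_shift2:
  assumes z: "z 1 - z 2 + z 3 - z 4 = 0"
  shows "dzb z (i + 2) = - dzb z i"
proof -
  have c: "cyc i \<in> {1..4}" by (rule cyc_range)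
  have e1: "cyc (i+1) = cyc (cyc i + 1)" "cyc (i+2) = cyc (cyc i + 2)" "cyc (i+2+1) = cyc (cyc i + 3)"
    using cyc_add[of i 1] cyc_add[of i 2] cyc_add[of i 3] by (simp_all add: add.assoc)
  have "cyc i = 1 \<or> cyc i = 2 \<or> cyc i = 3 \<or> cyc i = 4" using c by auto
  then show ?thesis using z unfolding dzb_def e1
    by (auto simp: cyc_def)
qed

lemma Tb_pos: "\<forall>i \<in> {1..4}. T i > 0 \<Longrightarrow> Tb T i > 0"
  unfolding Tb_def using cyc_range by blast

lemma limiter_bounds: assumes "r > 0" shows "0 \<le> limiter r \<and> limiter r \<le> 1"
proof -
  have "r^4 > 0" "r^3>0" "r^2>0" using assms by auto
  then have d: "r ^ 4 + r ^ 3 + r\<^sup>2 + r + 1 > 0" and n: "r ^ 4 + r ^ 3 + r\<^sup>2 + r \<ge> 0"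
    using assms by linarith+
  show ?thesis unfolding limiter_def using d n by (auto simp: divide_simps)
qed

lemma limiter_sym:
  fixes a b :: real assumes "a * b > 0"
  shows "b * limiter (a / b) = a * limiter (b / a)"
proof -
  have a: "a \<noteq> 0" and b: "b \<noteq> 0" using assms by auto
  have N: "a^4 + a^3*b + a^2*b^2 + a*b^3 + b^4 > 0"
  proof -
    have "a^3*b = a^2*(a*b)" "a*b^3 = b^2*(a*b)" by (simp_all add: power2_eq_square power3_eq_cube)
    moreover have "a^2*(a*b) > 0" "b^2*(a*b)>0" "a^2*b^2 \<ge> 0" "a^4>0" "b^4 > 0"
      using a b assms by auto
    ultimately show ?thesis by linarith
  qed
  have gen: "limiter (x/y) = (x^4 + x^3*y + x^2*y^2 + x*y^3) / (x^4 + x^3*y + x^2*y^2 + x*y^3 + y^4)"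
    if y: "y \<noteq> 0" for x y :: real
  proof -
    have e1: "x^4 + x^3*y + x^2*y^2 + x*y^3 = y^4 * ((x/y)^4 + (x/y)^3 + (x/y)^2 + (x/y))"
      using y by (simp add: field_simps power2_eq_square power3_eq_cube power4_eq_xxxx)
    have e2: "x^4 + x^3*y + x^2*y^2 + x*y^3 + y^4 = y^4 * ((x/y)^4 + (x/y)^3 + (x/y)^2 + (x/y) + 1)"
      using y by (simp add: field_simps power2_eq_square power3_eq_cube power4_eq_xxxx)
    show ?thesis by (subst e2, subst e1) (simp add: limiter_def y)
  qed
  have l1: "limiter (a/b) = (a^4 + a^3*b + a^2*b^2 + a*b^3) / (a^4 + a^3*b + a^2*b^2 + a*b^3 + b^4)"
    using gen[OF b] .
  have l2: "limiter (b/a) = (b^4 + b^3*a + b^2*a^2 + b*a^3) / (a^4 + a^3*b + a^2*b^2 + a*b^3 + b^4)"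
    using gen[OF a, of b] by (simp add: algebra_simps)
  show ?thesis unfolding l1 l2 using N
    by (simp add: field_simps power2_eq_square power3_eq_cube power4_eq_xxxx)
qed

lemma Hm_mono1: "0 < a \<Longrightarrow> a \<le> a' \<Longrightarrow> 0 < b \<Longrightarrow> Hm a b \<le> Hm a' b"
  unfolding Hm_def by (simp add: divide_simps) (simp add: algebra_simps mult_right_mono power2_eq_square)
lemma Hm_mono2: "0 < b \<Longrightarrow> b \<le> b' \<Longrightarrow> 0 < a \<Longrightarrow> Hm a b \<le> Hm a b'"
  unfolding Hm_def by (simp add: divide_simps) (simp add: algebra_simps mult_right_mono power2_eq_square)

lemma Hm_mono: "0 < a \<Longrightarrow> a \<le> a' \<Longrightarrow> 0 < b \<Longrightarrow> b \<le> b' \<Longrightarrow> Hm a b \<le> Hm a' b'"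
  by (meson Hm_mono1 Hm_mono2 order_trans less_le_trans)

lemma comb_le: "0 \<le> (c::real) \<Longrightarrow> 0 \<le> w \<Longrightarrow> w \<le> 1 \<Longrightarrow> x \<le> x' \<Longrightarrow> y \<le> y'
   \<Longrightarrow> c*((1-w)*x + w*y) \<le> c*((1-w)*x' + w*y')"
  by (intro mult_left_mono add_mono) auto
lemma comb_ge: "(c::real) \<le> 0 \<Longrightarrow> 0 \<le> w \<Longrightarrow> w \<le> 1 \<Longrightarrow> x \<le> x' \<Longrightarrow> y \<le> y'
   \<Longrightarrow> c*((1-w)*x' + w*y') \<le> c*((1-w)*x + w*y)"
  by (rule mult_left_mono_neg) (auto intro!: add_mono mult_left_mono)

lemma omega_bounds:
  assumes Tp: "\<And>i. Tb T i > 0"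
  shows "0 \<le> omegaG T z i \<and> omegaG T z i \<le> 1"
proof -
  have r: "0 < Tb T a * x / (Tb T b * y)" if "y * x > 0" for a b x y
  proof -
    have "0 < Tb T a" "0 < Tb T b" using Tp by auto
    then show ?thesis using that by (auto simp: zero_less_mult_iff zero_less_divide_iff mult_less_0_iff)
  qed
  show ?thesis unfolding omegaG_def
    using limiter_bounds[OF r] by auto
qed

definition P0 :: "(int \<Rightarrow> real) \<Rightarrow> (int \<Rightarrow> real) \<Rightarrow> (int \<Rightarrow> real) \<Rightarrow> (int \<Rightarrow> real) \<Rightarrow> int \<Rightarrow> real" where
  "P0 A B T z k =
     (let \<omega> = omegaG T z k in
      if dzb z k * dzb z (k + 1) > 0
      then (1 - \<omega>) * Hm (A k) (B (k + 1)) + \<omega> * Hm (A k) (B (k + 2))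
      else if dzb z k * dzb z (k - 1) > 0
      then (1 - \<omega>) * Hm (A k) (B (k + 1)) + \<omega> * Hm (A (k - 1)) (B (k + 1))
      else Hm (A k) (B (k + 1)))"

definition Q :: "real \<Rightarrow> (int \<Rightarrow> real) \<Rightarrow> (int \<Rightarrow> real) \<Rightarrow> (int \<Rightarrow> real) \<Rightarrow> (int \<Rightarrow> real) \<Rightarrow> int \<Rightarrow> real" where
  "Q D T z U V i = Tb T i * (D * dzb z i) *
     (if D * dzb z i > 0 then P0 U V T z i else if D * dzb z i < 0 then P0 V U T z i else 0)"

lemma psi0_P0: "psi0 a b T z S k = P0 (\<lambda>i. a (S (cyc i))) (\<lambda>i. b (S (cyc i))) T z k"
  by (simp add: psi0_def P0_def Let_def)

lemma Gflux_Q: "Gflux rho g lam T z S l k = g * Q (rho l - rho (other l)) T z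
    (\<lambda>i. lam l (S (cyc i))) (\<lambda>i. lam (other l) (S (cyc i))) k"
  unfolding Gflux_def Q_def psi_def Let_def psi0_P0
  by (simp add: algebra_simps)

lemma Q_neg: "Q (-D) T z U V i = - Q D T z V U i"
  unfolding Q_def by auto




lemma Mpos:
  fixes U1 U2 V1 V2 :: "int \<Rightarrow> real"
  assumes D: "D > 0" and Tp: "\<And>i. Tb T i > 0" and dz2: "\<And>i. dzb z (i+2) = - dzb z i"
    and pos: "\<And>i. U1 i > 0" "\<And>i. U2 i > 0" "\<And>i. V1 i > 0" "\<And>i. V2 i > 0"
    and leU: "\<And>i. U1 i \<le> U2 i" and leV: "\<And>i. V2 i \<le> V1 i"
    and eU: "U1 k = U2 k" and eV: "V1 k = V2 k"
  shows "Q D T z U2 V2 k - Q D T z U2 V2 (k-1) \<le> Q D T z U1 V1 k - Q D T z U1 V1 (k-1)"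
proof -
  define a where "a = dzb z (k-1)"
  define b where "b = dzb z k"
  have zp: "dzb z (k+1) = -a" using dz2[of "k-1"] unfolding a_def by (simp add: algebra_simps)
  have zm: "dzb z (k-2) = -b" using dz2[of "k-2"] unfolding b_def by (simp add: algebra_simps)
  have ix: "k - 1 + 2 = k + 1" "k - 1 - 1 = k - 2" by simp_all
  define wk where "wk = omegaG T z k"
  define wm where "wm = omegaG T z (k-1)"
  have w: "0 \<le> wk" "wk \<le> 1" "0 \<le> wm" "wm \<le> 1"
    using omega_bounds[OF Tp] unfolding wk_def wm_def by auto
  have kU: "U2 k \<le> U1 k" and kV: "V1 k \<le> V2 k" using eU eV by simp_all
  have Qk: "Q D T z U V k = Tb T k * (D*b) * (if b > 0 then P0 U V T z k else if b < 0 then P0 V U T z k else 0)" for U V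
    unfolding Q_def b_def[symmetric] using D by (simp add: zero_less_mult_iff mult_less_0_iff)
  have Qm: "Q D T z U V (k-1) = Tb T (k-1) * (D*a) * (if a > 0 then P0 U V T z (k-1) else if a < 0 then P0 V U T z (k-1) else 0)" for U V
    unfolding Q_def a_def[symmetric] using D by (simp add: zero_less_mult_iff mult_less_0_iff)
  have Pk: "P0 A B T z k = (if a * b < 0 then (1-wk)*Hm (A k) (B (k+1)) + wk*Hm (A k) (B (k+2))
      else if a * b > 0 then (1-wk)*Hm (A k) (B (k+1)) + wk*Hm (A (k-1)) (B (k+1))
      else Hm (A k) (B (k+1)))" for A B
    unfolding P0_def Let_def wk_def[symmetric] b_def[symmetric] a_def[symmetric] zp
    by (simp add: algebra_simps)
  have Pm: "P0 A B T z (k-1) = (if a * b > 0 then (1-wm)*Hm (A (k-1)) (B k) + wm*Hm (A (k-1)) (B (k+1))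
      else if a * b < 0 then (1-wm)*Hm (A (k-1)) (B k) + wm*Hm (A (k-2)) (B k)
      else Hm (A (k-1)) (B k))" for A B
    unfolding P0_def Let_def wm_def[symmetric] b_def[symmetric] a_def[symmetric] ix zm
    by (simp add: algebra_simps b_def[symmetric])
  have Tk: "Tb T k > 0" and Tm: "Tb T (k-1) > 0" using Tp by auto
  have H: "Hm x y \<le> Hm x' y'" if "0 < x" "x \<le> x'" "0 < y" "y \<le> y'" for x x' y y'
    using Hm_mono that by blast
  show ?thesis
  proof (cases "b = 0")
    case b0: True
    have Qk0: "Q D T z U V k = 0" for U V using Qk b0 by simp
    show ?thesis
    proof (cases a "0::real" rule: linorder_cases)
      case less
      have eq: "Q D T z U V k - Q D T z U V (k-1) = - (Tb T (k-1) * (D*a) * Hm (V (k-1)) (U k))" for U V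
        using Qk0 Qm Pm less b0 by simp
      have h: "Hm (V2 (k-1)) (U2 k) \<le> Hm (V1 (k-1)) (U1 k)" by (rule H) (simp_all add: pos leV kU)
      have c: "Tb T (k-1) * (D*a) \<le> 0" using Tm D less by (simp add: mult_le_0_iff)
      show ?thesis unfolding eq using mult_left_mono_neg[OF h c] by linarith
    next
      case equal
      have eq: "Q D T z U V k - Q D T z U V (k-1) = 0" for U V
        using Qk0 Qm Pm equal b0 by simp
      show ?thesis unfolding eq by simp
    next
      case greater
      have eq: "Q D T z U V k - Q D T z U V (k-1) = - (Tb T (k-1) * (D*a) * Hm (U (k-1)) (V k))" for U V
        using Qk0 Qm Pm greater b0 by simp
      have h: "Hm (U1 (k-1)) (V1 k) \<le> Hm (U2 (k-1)) (V2 k)" by (rule H) (simp_all add: pos leU kV)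
      have c: "0 \<le> Tb T (k-1) * (D*a)" using Tm D greater by simp
      show ?thesis unfolding eq using mult_left_mono[OF h c] by linarith
    qed
  next
    case bn0: False
    show ?thesis
    proof (cases "a = 0")
      case a0: True
      have Qm0: "Q D T z U V (k-1) = 0" for U V using Qm a0 by simp
      show ?thesis
      proof (cases "b > 0")
        case bp: True
        have eq: "Q D T z U V k - Q D T z U V (k-1) = Tb T k * (D*b) * Hm (U k) (V (k+1))" for U V
          using Qm0 Qk Pk bp a0 by simp
        have h: "Hm (U2 k) (V2 (k+1)) \<le> Hm (U1 k) (V1 (k+1))" by (rule H) (simp_all add: pos leV kU)
        have c: "0 \<le> Tb T k * (D*b)" using Tk D bp by simp
        show ?thesis unfolding eq using mult_left_mono[OF h c] by linarith
      next
        case bn: False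
        then have bn: "b < 0" using bn0 by simp
        have eq: "Q D T z U V k - Q D T z U V (k-1) = Tb T k * (D*b) * Hm (V k) (U (k+1))" for U V
          using Qm0 Qk Pk bn a0 by simp
        have h: "Hm (V1 k) (U1 (k+1)) \<le> Hm (V2 k) (U2 (k+1))" by (rule H) (simp_all add: pos leU kV)
        have c: "Tb T k * (D*b) \<le> 0" using Tk D bn by (simp add: mult_le_0_iff)
        show ?thesis unfolding eq using mult_left_mono_neg[OF h c] by linarith
      qed
    next
      case an0: False
      show ?thesis
      proof (cases "a * b > 0")
        case ab: True
        have "Tb T k * b * wk = Tb T (k-1) * a * wm"
        proof -
          have wk': "wk = limiter (Tb T (k-1) * a / (Tb T k * b))"
            unfolding wk_def omegaG_def b_def[symmetric] a_def[symmetric] zp using ab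
            by (simp add: algebra_simps)
          have wm': "wm = limiter (Tb T k * b / (Tb T (k-1) * a))"
            unfolding wm_def omegaG_def b_def[symmetric] a_def[symmetric] zm using ab
            by (simp add: algebra_simps b_def[symmetric])
          have p: "(Tb T (k-1) * a) * (Tb T k * b) > 0" using ab Tk Tm
            by (metis mult_pos_pos mult.assoc mult.left_commute)
          show ?thesis unfolding wk' wm' using limiter_sym[OF p] by (simp add: algebra_simps)
        qed
        then have iden: "Tb T k * (D * b) * (wk * X) = Tb T (k-1) * (D*a) * (wm * X)" for X
          by (metis mult.assoc mult.left_commute)
        show ?thesis
        proof (cases "b > 0")
          case bp: True
          then have ap: "a > 0" using ab by (simp add: zero_less_mult_iff)
          have eq: "Q D T z U V k - Q D T z U V (k-1) =
              Tb T k * (D*b) * ((1-wk) * Hm (U k) (V (k+1))) - Tb T (k-1) * (D*a) * ((1-wm) * Hm (U (k-1)) (V k))" for U V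
          proof -
            have e1: "Q D T z U V k = Tb T k * (D*b) * ((1-wk) * Hm (U k) (V (k+1))) + Tb T k * (D * b) * (wk * Hm (U (k-1)) (V (k+1)))"
              using Qk Pk ab bp by (simp add: algebra_simps)
            have e2: "Q D T z U V (k-1) = Tb T (k-1) * (D*a) * ((1-wm) * Hm (U (k-1)) (V k)) + Tb T (k-1) * (D * a) * (wm * Hm (U (k-1)) (V (k+1)))"
              using Qm Pm ab ap by (simp add: algebra_simps)
            show ?thesis using e1 e2 iden[of "Hm (U (k-1)) (V (k+1))"] by linarith
          qed
          have h1: "Hm (U2 k) (V2 (k+1)) \<le> Hm (U1 k) (V1 (k+1))" by (rule H) (simp_all add: pos leV kU)
          have h2: "Hm (U1 (k-1)) (V1 k) \<le> Hm (U2 (k-1)) (V2 k)" by (rule H) (simp_all add: pos leU kV)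
          have c1: "0 \<le> Tb T k * (D*b) * (1-wk)" using Tk D bp w by simp
          have c2: "0 \<le> Tb T (k-1) * (D*a) * (1-wm)" using Tm D ap w by simp
          show ?thesis unfolding eq using mult_left_mono[OF h1 c1] mult_left_mono[OF h2 c2]
            by (simp add: algebra_simps)
        next
          case bn: False
          then have bn: "b < 0" using bn0 by simp
          then have an: "a < 0" using ab by (simp add: zero_less_mult_iff)
          have eq: "Q D T z U V k - Q D T z U V (k-1) =
              Tb T k * (D*b) * ((1-wk) * Hm (V k) (U (k+1))) - Tb T (k-1) * (D*a) * ((1-wm) * Hm (V (k-1)) (U k))" for U V
          proof -
            have e1: "Q D T z U V k = Tb T k * (D*b) * ((1-wk) * Hm (V k) (U (k+1))) + Tb T k * (D * b) * (wk * Hm (V (k-1)) (U (k+1)))"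
              using Qk Pk ab bn by (simp add: algebra_simps)
            have e2: "Q D T z U V (k-1) = Tb T (k-1) * (D*a) * ((1-wm) * Hm (V (k-1)) (U k)) + Tb T (k-1) * (D * a) * (wm * Hm (V (k-1)) (U (k+1)))"
              using Qm Pm ab an by (simp add: algebra_simps)
            show ?thesis using e1 e2 iden[of "Hm (V (k-1)) (U (k+1))"] by linarith
          qed
          have h1: "Hm (V1 k) (U1 (k+1)) \<le> Hm (V2 k) (U2 (k+1))" by (rule H) (simp_all add: pos leU kV)
          have h2: "Hm (V2 (k-1)) (U2 k) \<le> Hm (V1 (k-1)) (U1 k)" by (rule H) (simp_all add: pos leV kU)
          have c1: "Tb T k * (D*b) * (1-wk) \<le> 0" using Tk D bn w by (simp add: mult_le_0_iff)
          have c2: "Tb T (k-1) * (D*a) * (1-wm) \<le> 0" using Tm D an w by (simp add: mult_le_0_iff)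
          show ?thesis unfolding eq using mult_left_mono_neg[OF h1 c1] mult_left_mono_neg[OF h2 c2]
            by (simp add: algebra_simps)
        qed
      next
        case ab: False
        then have ab: "a * b < 0" using an0 bn0 by (simp add: zero_less_mult_iff mult_less_0_iff) linarith
        show ?thesis
        proof (cases "b > 0")
          case bp: True
          then have an: "a < 0" using ab by (simp add: mult_less_0_iff)
          have e1: "Q D T z U V k = Tb T k * (D*b) * ((1-wk) * Hm (U k) (V (k+1)) + wk * Hm (U k) (V (k+2)))" for U V
            using Qk Pk ab bp by simp
          have e2: "Q D T z U V (k-1) = Tb T (k-1) * (D*a) * ((1-wm) * Hm (V (k-1)) (U k) + wm * Hm (V (k-2)) (U k))" for U V
            using Qm Pm ab an by simp
          have c1: "0 \<le> Tb T k * (D*b)" using Tk D bp by simp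
          have c2: "Tb T (k-1) * (D*a) \<le> 0" using Tm D an by (simp add: mult_le_0_iff)
          have i1: "Q D T z U2 V2 k \<le> Q D T z U1 V1 k" unfolding e1
            by (rule comb_le[OF c1 w(1,2)]; rule H; simp add: pos leV kU)
          have i2: "Q D T z U1 V1 (k-1) \<le> Q D T z U2 V2 (k-1)" unfolding e2
            by (rule comb_ge[OF c2 w(3,4)]; rule H; simp add: pos leV kU)
          show ?thesis using i1 i2 by linarith
        next
          case bn: False
          then have bn: "b < 0" using bn0 by simp
          then have ap: "a > 0" using ab by (simp add: mult_less_0_iff)
          have e1: "Q D T z U V k = Tb T k * (D*b) * ((1-wk) * Hm (V k) (U (k+1)) + wk * Hm (V k) (U (k+2)))" for U V
            using Qk Pk ab bn by simp
          have e2: "Q D T z U V (k-1) = Tb T (k-1) * (D*a) * ((1-wm) * Hm (U (k-1)) (V k) + wm * Hm (U (k-2)) (V k))" for U V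
            using Qm Pm ab ap by simp
          have c1: "Tb T k * (D*b) \<le> 0" using Tk D bn by (simp add: mult_le_0_iff)
          have c2: "0 \<le> Tb T (k-1) * (D*a)" using Tm D ap by simp
          have i1: "Q D T z U2 V2 k \<le> Q D T z U1 V1 k" unfolding e1
            by (rule comb_ge[OF c1 w(1,2)]; rule H; simp add: pos leU kV)
          have i2: "Q D T z U1 V1 (k-1) \<le> Q D T z U2 V2 (k-1)" unfolding e2
            by (rule comb_le[OF c2 w(3,4)]; rule H; simp add: pos leU kV)
          show ?thesis using i1 i2 by linarith
        qed
      qed
    qed
  qed
qed




lemma Mgen:
  fixes U1 U2 V1 V2 :: "int \<Rightarrow> real"
  assumes Tp: "\<And>i. Tb T i > 0" and dz2: "\<And>i. dzb z (i+2) = - dzb z i"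
    and pos: "\<And>i. U1 i > 0" "\<And>i. U2 i > 0" "\<And>i. V1 i > 0" "\<And>i. V2 i > 0"
    and leU: "\<And>i. U1 i \<le> U2 i" and leV: "\<And>i. V2 i \<le> V1 i"
    and eU: "U1 k = U2 k" and eV: "V1 k = V2 k"
  shows "Q D T z U2 V2 k - Q D T z U2 V2 (k-1) \<le> Q D T z U1 V1 k - Q D T z U1 V1 (k-1)"
proof (cases D "0::real" rule: linorder_cases)
  case less
  then obtain D' where D': "D' > 0" "D = - D'" by (metis neg_0_less_iff_less minus_minus)
  have "Q D' T z V1 U1 k - Q D' T z V1 U1 (k-1) \<le> Q D' T z V2 U2 k - Q D' T z V2 U2 (k-1)"
    by (rule Mpos[OF D'(1) Tp dz2]) (use pos leU leV eU eV in auto)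
  then show ?thesis unfolding D'(2) Q_neg by linarith
next
  case equal
  then show ?thesis by (simp add: Q_def)
next
  case greater
  show ?thesis by (rule Mpos) (use greater Tp dz2 pos leU leV eU eV in auto)
qed

lemma Hm_diff: "f differentiable (at x) \<Longrightarrow> g differentiable (at x) \<Longrightarrow> f x + g x \<noteq> 0
   \<Longrightarrow> (\<lambda>t. Hm (f t) (g t)) differentiable (at x)"
  unfolding Hm_def by (auto intro!: derivative_intros)

lemma Q_diff:
  assumes dX: "\<And>i. (\<lambda>t. X t i) differentiable (at x)" and dY: "\<And>i. (\<lambda>t. Y t i) differentiable (at x)"
    and pX: "\<And>t i. X t i > 0" and pY: "\<And>t i. Y t i > 0"
  shows "(\<lambda>t. Q D T z (X t) (Y t) i) differentiable (at x)"
proof -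
  have h: "(\<lambda>t. Hm (A t p) (B t q)) differentiable (at x)"
    if "A = X \<and> B = Y \<or> A = Y \<and> B = X" for A B p q
  proof -
    have "A x p + B x q > 0" using that pX pY by (metis add_pos_pos)
    then show ?thesis using that dX dY by (intro Hm_diff) auto
  qed
  show ?thesis unfolding Q_def P0_def Let_def
    by (cases "0 < D * dzb z i"; cases "D * dzb z i < 0"; cases "0 < dzb z i * dzb z (i+1)";
        cases "0 < dzb z i * dzb z (i - 1)") (auto intro!: derivative_intros h)
qed

lemma upd_diff: "lam p differentiable (at x) \<Longrightarrow> (\<lambda>t. lam p ((S(j:=t)) i)) differentiable (at x)"
  by (cases "i = j") auto

lemma deriv_le0: fixes f :: "real \<Rightarrow> real"
  assumes d: "f differentiable (at x)" and m: "antimono f" shows "deriv f x \<le> 0"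
proof (rule ccontr)
  assume "\<not> deriv f x \<le> 0"
  then have p: "deriv f x > 0" by simp
  have "DERIV f x :> deriv f x" using d by (simp add: DERIV_deriv_iff_real_differentiable)
  from DERIV_pos_inc_right[OF this p] obtain dd where "dd > 0" "\<forall>h>0. h < dd \<longrightarrow> f x < f (x + h)" by blast
  then have "f x < f (x + dd/2)" by auto
  moreover have "f (x + dd/2) \<le> f x" using m \<open>dd > 0\<close> by (auto simp: antimono_def)
  ultimately show False by simp
qed

lemma deriv_ge0: fixes f :: "real \<Rightarrow> real"
  assumes d: "f differentiable (at x)" and m: "mono f" shows "deriv f x \<ge> 0"
proof (rule ccontr)
  assume "\<not> deriv f x \<ge> 0"
  then have p: "deriv f x < 0" by simp
  have "DERIV f x :> deriv f x" using d by (simp add: DERIV_deriv_iff_real_differentiable)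
  from DERIV_neg_dec_right[OF this p] obtain dd where "dd > 0" "\<forall>h>0. h < dd \<longrightarrow> f x > f (x + h)" by blast
  then have "f x > f (x + dd/2)" by auto
  moreover have "f x \<le> f (x + dd/2)" using m \<open>dd > 0\<close> by (auto simp: mono_def)
  ultimately show False by simp
qed




theorem mainTheorem5:
  fixes z S T :: "int \<Rightarrow> real" and rho :: "phase \<Rightarrow> real" and g :: real
    and lam :: "phase \<Rightarrow> real \<Rightarrow> real" and l :: phase and k j :: int
  assumes T_pos: "\<forall>i \<in> {1..4}. T i > 0"
    and g_pos: "g > 0"
    and lam_pos: "\<forall>p x. lam p x > 0"
    and lam_diff: "\<forall>p x. lam p differentiable (at x)"
    and lam_w_mono: "mono (lam W)"
    and lam_nw_antimono: "antimono (lam NW)"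
    and z_cond: "z 1 - z 2 + z 3 - z 4 = 0"
    and k_range: "k \<in> {1..4}" and j_range: "j \<in> {1..4}" and jk: "j \<noteq> k"
  shows "phase_pderiv l
           (\<lambda>S'. Gflux rho g lam T z S' l k - Gflux rho g lam T z S' l (k - 1)) S j \<le> 0"
proof -
  have Tp: "\<And>i. Tb T i > 0" using Tb_pos[OF T_pos] .
  have dz2: "\<And>i. dzb z (i+2) = - dzb z i" using dz_shift2[OF z_cond] .
  have ck: "cyc k = k" using cyc_id k_range by blast
  define D where "D = rho l - rho (other l)"
  define U where "U = (\<lambda>t. (\<lambda>i. lam l ((S(j:=t)) (cyc i))))"
  define V where "V = (\<lambda>t. (\<lambda>i. lam (other l) ((S(j:=t)) (cyc i))))"
  define F where "F = (\<lambda>t. (\<lambda>S'. Gflux rho g lam T z S' l k - Gflux rho g lam T z S' l (k - 1)) (S(j:=t)))"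
  have Feq: "F t = g * (Q D T z (U t) (V t) k - Q D T z (U t) (V t) (k-1))" for t
    unfolding F_def Gflux_Q U_def V_def D_def by (simp add: algebra_simps)
  have Feq': "F = (\<lambda>t. g * (Q D T z (U t) (V t) k - Q D T z (U t) (V t) (k-1)))"
    using Feq by (intro ext) simp
  have Qd: "(\<lambda>t. Q D T z (U t) (V t) i) differentiable (at (S j))" for i
    by (rule Q_diff) (auto simp: U_def V_def lam_pos intro!: upd_diff[simplified] lam_diff[rule_format])
  have Fd: "F differentiable (at (S j))"
    unfolding Feq' using Qd by (auto intro!: derivative_intros)
  have pU: "\<And>t i. U t i > 0" and pV: "\<And>t i. V t i > 0" unfolding U_def V_def using lam_pos by auto
  have kU: "U t1 k = U t2 k" and kV: "V t1 k = V t2 k" for t1 t2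
    unfolding U_def V_def using ck jk by auto
  have pd: "phase_pderiv l (\<lambda>S'. Gflux rho g lam T z S' l k - Gflux rho g lam T z S' l (k - 1)) S j
      = (if l = W then deriv F (S j) else - deriv F (S j))"
    unfolding phase_pderiv_def Let_def F_def by simp
  show ?thesis
  proof (cases l)
    case W
    have "F t2 \<le> F t1" if "t1 \<le> t2" for t1 t2
    proof -
      have leU: "U t1 i \<le> U t2 i" for i
        unfolding U_def W using that by (auto intro: monoD[OF lam_w_mono])
      have leV: "V t2 i \<le> V t1 i" for i
        unfolding V_def W using that by (auto intro: antimonoD[OF lam_nw_antimono])
      have "Q D T z (U t2) (V t2) k - Q D T z (U t2) (V t2) (k-1) \<le> Q D T z (U t1) (V t1) k - Q D T z (U t1) (V t1) (k-1)"
        by (rule Mgen) (use Tp dz2 pU pV leU leV kU kV in auto)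
      then show ?thesis unfolding Feq using g_pos by simp
    qed
    then have "antimono F" by (auto simp: antimono_def)
    then show ?thesis unfolding pd using deriv_le0[OF Fd] W by simp
  next
    case NW
    have "F t1 \<le> F t2" if "t1 \<le> t2" for t1 t2
    proof -
      have leU: "U t2 i \<le> U t1 i" for i
        unfolding U_def NW using that by (auto intro: antimonoD[OF lam_nw_antimono])
      have leV: "V t1 i \<le> V t2 i" for i
        unfolding V_def NW using that by (auto intro: monoD[OF lam_w_mono])
      have "Q D T z (U t1) (V t1) k - Q D T z (U t1) (V t1) (k-1) \<le> Q D T z (U t2) (V t2) k - Q D T z (U t2) (V t2) (k-1)"
        by (rule Mgen) (use Tp dz2 pU pV leU leV kU kV in auto)
      then show ?thesis unfolding Feq using g_pos by simp
    qed
    then have "mono F" by (auto simp: mono_def)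
    then show ?thesis unfolding pd using deriv_ge0[OF Fd] NW by simp
  qed
qed


end
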